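(* Let $(X,d)$ be a compact metric space and $\mathbb{F}=\{f_n:n\in\mathbb{N}\}$ a sequence of continuous surjective self-maps of $X$, and let $k\in\mathbb{N}$. Then $(X,\mathbb{F}_k)$ is equicontinuous if and only if $(X,\mathbb{F})$ is equicontinuous.
   Context: Write $\omega_n=f_n\circ\cdots\circ f_1$ and, for $n>k$, $\omega^k_n=f_n\circ\cdots\circ f_{k+1}$. $\mathbb{F}_k=\{f_n:n\ge k+1\}$ is the truncated family, generating the system with compositions $\omega^k_n$, $n>k$. $(X,\mathbb{F})$ is equicontinuous if for every $\epsilon>0$ there is $\delta>0$ such that $d(x,y)<\delta$ implies $d(\omega_n(x),\omega_n(y))<\epsilon$ for all $n\in\mathbb{N}$ and all $x,y\in X$; $(X,\mathbb{F}_k)$ is equicontinuous if the same holds with $\omega^k_n$, $n>k$, in place of $\omega_n$. *)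

theory Defs
  imports "HOL-Analysis.Analysis"
begin

text \<open>The maps are indexed from 1: f 1, f 2, ...  (f 0 is unused).
  omega f k n = f n \<circ> ... \<circ> f (k+1) for n > k (and the identity for n \<le> k).
  The composition omega_n of the paper is omega f 0 n.\<close>

primrec omega :: "(nat \<Rightarrow> 'a \<Rightarrow> 'a) \<Rightarrow> nat \<Rightarrow> nat \<Rightarrow> 'a \<Rightarrow> 'a" where
  "omega f k 0 = id"
| "omega f k (Suc n) = (if Suc n \<le> k then id else f (Suc n) \<circ> omega f k n)"

text \<open>Equicontinuity of the truncated system (X, F_k) on the set X:
  uniformly in n > k, the compositions omega f k n are equicontinuous.
  (X, F) itself is the case k = 0.\<close>

definition equicont_from :: "'a::metric_space set \<Rightarrow> (nat \<Rightarrow> 'a \<Rightarrow> 'a) \<Rightarrow> nat \<Rightarrow> bool" where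
  "equicont_from X f k \<longleftrightarrow>
     (\<forall>\<epsilon>>0. \<exists>\<delta>>0. \<forall>x\<in>X. \<forall>y\<in>X. dist x y < \<delta> \<longrightarrow>
        (\<forall>n>k. dist (omega f k n x) (omega f k n y) < \<epsilon>))"

end

theory Submission
  imports Defs
begin

lemma omega_id: "n \<le> k \<Longrightarrow> omega f k n = id"
  by (cases n) auto

lemma omega_split: "k \<le> n \<Longrightarrow> omega f 0 n x = omega f k n (omega f 0 k x)"
proof (induction n)
  case 0
  then show ?case by simp
next
  case (Suc m)
  show ?case
  proof (cases "Suc m = k")
    case True
    then show ?thesis using omega_id[of k k f] by simp
  next
    case False
    then have "k \<le> m" using Suc.prems by simp
    then show ?thesis using Suc.IH False Suc.prems by auto
  qed
qed

lemma omega_props: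
  assumes "\<And>n. n \<ge> 1 \<Longrightarrow> continuous_on X (f n)"
    and "\<And>n. n \<ge> 1 \<Longrightarrow> f n ` X = X"
  shows "continuous_on X (omega f 0 n) \<and> omega f 0 n ` X = X"
proof (induction n)
  case 0
  then show ?case by (simp add: continuous_on_id)
next
  case (Suc m)
  have c: "continuous_on X (f (Suc m))" "f (Suc m) ` X = X" using assms by auto
  have "continuous_on X (f (Suc m) \<circ> omega f 0 m)"
    using Suc c by (intro continuous_on_compose) auto
  moreover have "(f (Suc m) \<circ> omega f 0 m) ` X = X"
    using Suc c by (metis image_comp)
  ultimately show ?case by simp
qed

lemma finite_equi:
  fixes m :: nat
  assumes "compact X"
    and "\<And>n. continuous_on X (g n)"
  shows "\<forall>\<epsilon>>0. \<exists>\<delta>>0. \<forall>x\<in>X. \<forall>y\<in>X. dist x y < \<delta> \<longrightarrow> (\<forall>n\<le>m. dist (g n x) (g n y) < \<epsilon>)"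
proof (induction m)
  case 0
  show ?case
  proof (intro allI impI)
    fix \<epsilon> :: real assume e: "\<epsilon> > 0"
    have "uniformly_continuous_on X (g 0)"
      using assms compact_uniformly_continuous by blast
    then obtain d where "d > 0" "\<forall>x\<in>X. \<forall>y\<in>X. dist y x < d \<longrightarrow> dist (g 0 y) (g 0 x) < \<epsilon>"
      using e unfolding uniformly_continuous_on_def by blast
    then show "\<exists>\<delta>>0. \<forall>x\<in>X. \<forall>y\<in>X. dist x y < \<delta> \<longrightarrow> (\<forall>n\<le>0. dist (g n x) (g n y) < \<epsilon>)"
      by (metis dist_commute le_zero_eq)
  qed
next
  case (Suc m)
  show ?case
  proof (intro allI impI)
    fix \<epsilon> :: real assume e: "\<epsilon> > 0"
    have "uniformly_continuous_on X (g (Suc m))"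
      using assms compact_uniformly_continuous by blast
    then obtain d where d: "d > 0" "\<forall>x\<in>X. \<forall>y\<in>X. dist y x < d \<longrightarrow> dist (g (Suc m) y) (g (Suc m) x) < \<epsilon>"
      using e unfolding uniformly_continuous_on_def by blast
    obtain d2 where d2: "d2 > 0" "\<forall>x\<in>X. \<forall>y\<in>X. dist x y < d2 \<longrightarrow> (\<forall>n\<le>m. dist (g n x) (g n y) < \<epsilon>)"
      using Suc e by blast
    show "\<exists>\<delta>>0. \<forall>x\<in>X. \<forall>y\<in>X. dist x y < \<delta> \<longrightarrow> (\<forall>n\<le>Suc m. dist (g n x) (g n y) < \<epsilon>)"
      apply (rule exI[of _ "min d d2"])
      using d d2 by (auto simp: le_Suc_eq dist_commute)
  qed
qed

lemma fiber_lemma: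
  fixes g :: "'a::metric_space \<Rightarrow> 'a"
  assumes "compact X" "continuous_on X g" "\<eta> > 0"
  shows "\<exists>\<delta>>0. \<forall>u\<in>X. \<forall>v\<in>X. dist (g u) (g v) < \<delta> \<longrightarrow>
           (\<exists>u'\<in>X. \<exists>v'\<in>X. g u' = g v' \<and> dist u u' < \<eta> \<and> dist v v' < \<eta>)"
proof (rule ccontr)
  assume "\<not> ?thesis"
  then have H: "\<forall>\<delta>>0. \<exists>u\<in>X. \<exists>v\<in>X. dist (g u) (g v) < \<delta> \<and>
           (\<forall>u'\<in>X. \<forall>v'\<in>X. g u' = g v' \<longrightarrow> dist u u' \<ge> \<eta> \<or> dist v v' \<ge> \<eta>)"
    by (auto simp: not_less) (meson leD)
  have "\<forall>m::nat. \<exists>p. fst p \<in> X \<and> snd p \<in> X \<and> dist (g (fst p)) (g (snd p)) < 1 / (real m + 1) \<and>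
           (\<forall>u'\<in>X. \<forall>v'\<in>X. g u' = g v' \<longrightarrow> dist (fst p) u' \<ge> \<eta> \<or> dist (snd p) v' \<ge> \<eta>)"
  proof
    fix m :: nat
    have "1 / (real m + 1) > 0" by simp
    then obtain u v where "u \<in> X" "v \<in> X" "dist (g u) (g v) < 1 / (real m + 1)"
        "\<forall>u'\<in>X. \<forall>v'\<in>X. g u' = g v' \<longrightarrow> dist u u' \<ge> \<eta> \<or> dist v v' \<ge> \<eta>"
      using H by blast
    then show "\<exists>p. fst p \<in> X \<and> snd p \<in> X \<and> dist (g (fst p)) (g (snd p)) < 1 / (real m + 1) \<and>
           (\<forall>u'\<in>X. \<forall>v'\<in>X. g u' = g v' \<longrightarrow> dist (fst p) u' \<ge> \<eta> \<or> dist (snd p) v' \<ge> \<eta>)"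
      by (intro exI[of _ "(u,v)"]) auto
  qed
  then obtain p where p: "\<And>m. fst (p m) \<in> X" "\<And>m. snd (p m) \<in> X"
    "\<And>m. dist (g (fst (p m))) (g (snd (p m))) < 1 / (real m + 1)"
    "\<And>m. \<forall>u'\<in>X. \<forall>v'\<in>X. g u' = g v' \<longrightarrow> dist (fst (p m)) u' \<ge> \<eta> \<or> dist (snd (p m)) v' \<ge> \<eta>"
    by metis
  have "compact (X \<times> X)" by (rule compact_Times[OF assms(1) assms(1)])
  moreover have "\<forall>m. p m \<in> X \<times> X" using p by (simp add: mem_Times_iff)
  ultimately obtain l r where l: "l \<in> X \<times> X" "strict_mono r" "(p \<circ> r) \<longlonglongrightarrow> l"
    using compact_imp_seq_compact seq_compact_def by metis
  define a where "a = fst l"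
  define b where "b = snd l"
  have aX: "a \<in> X" and bX: "b \<in> X" using l(1) by (auto simp: a_def b_def mem_Times_iff)
  have ua: "(\<lambda>m. fst (p (r m))) \<longlonglongrightarrow> a"
    using tendsto_fst[OF l(3)] by (simp add: a_def o_def)
  have vb: "(\<lambda>m. snd (p (r m))) \<longlonglongrightarrow> b"
    using tendsto_snd[OF l(3)] by (simp add: b_def o_def)
  have gua: "(\<lambda>m. g (fst (p (r m)))) \<longlonglongrightarrow> g a"
    using continuous_on_tendsto_compose[OF assms(2) ua aX] p by auto
  have gvb: "(\<lambda>m. g (snd (p (r m)))) \<longlonglongrightarrow> g b"
    using continuous_on_tendsto_compose[OF assms(2) vb bX] p by auto
  have d1: "(\<lambda>m. dist (g (fst (p (r m)))) (g (snd (p (r m))))) \<longlonglongrightarrow> dist (g a) (g b)"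
    using tendsto_dist[OF gua gvb] .
  have lim0: "(\<lambda>m. 1 / (real (r m) + 1)) \<longlonglongrightarrow> 0"
  proof -
    have "(\<lambda>m. 1 / (real m + 1)) \<longlonglongrightarrow> (0::real)"
      using LIMSEQ_inverse_real_of_nat by (simp add: inverse_eq_divide add.commute)
    then show ?thesis using LIMSEQ_subseq_LIMSEQ[OF _ l(2)] by (simp add: o_def)
  qed
  have ev: "\<forall>\<^sub>F m in sequentially. dist (g (fst (p (r m)))) (g (snd (p (r m)))) \<le> 1 / (real (r m) + 1)"
    using p(3) by (simp add: always_eventually less_imp_le)
  have "dist (g a) (g b) \<le> 0"
    by (rule tendsto_le[OF _ lim0 d1 ev]) simp
  then have gab: "g a = g b" by simp
  have "\<forall>\<^sub>F m in sequentially. dist (fst (p (r m))) a < \<eta>"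
    using ua assms(3) by (simp add: tendsto_iff)
  moreover have "\<forall>\<^sub>F m in sequentially. dist (snd (p (r m))) b < \<eta>"
    using vb assms(3) by (simp add: tendsto_iff)
  ultimately have "\<exists>m. dist (fst (p (r m))) a < \<eta> \<and> dist (snd (p (r m))) b < \<eta>"
    by (metis (mono_tags, lifting) eventually_conj eventually_sequentially order.refl)
  then show False using p(4) aX bX gab by (meson not_less)
qed

theorem mainTheorem2:
  fixes X :: "'a::metric_space set" and f :: "nat \<Rightarrow> 'a \<Rightarrow> 'a" and k :: nat
  assumes "compact X"
    and "\<And>n. n \<ge> 1 \<Longrightarrow> continuous_on X (f n)"
    and "\<And>n. n \<ge> 1 \<Longrightarrow> f n ` X = X"
  shows "equicont_from X f k \<longleftrightarrow> equicont_from X f 0"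
proof
  have P: "\<And>n. continuous_on X (omega f 0 n)" "\<And>n. omega f 0 n ` X = X"
    using omega_props[OF assms(2,3)] by auto
  have mapsX: "\<And>n x. x \<in> X \<Longrightarrow> omega f 0 n x \<in> X" using P(2) by blast
  {
    assume E: "equicont_from X f k"
    show "equicont_from X f 0" unfolding equicont_from_def
    proof (intro allI impI)
      fix \<epsilon> :: real assume e: "\<epsilon> > 0"
      obtain d1 where d1: "d1 > 0" "\<forall>x\<in>X. \<forall>y\<in>X. dist x y < d1 \<longrightarrow>
          (\<forall>n>k. dist (omega f k n x) (omega f k n y) < \<epsilon>)"
        using E[unfolded equicont_from_def, rule_format, OF e] by blast
      obtain d where d: "d > 0" "\<forall>x\<in>X. \<forall>y\<in>X. dist x y < d \<longrightarrow>
          (\<forall>n\<le>k. dist (omega f 0 n x) (omega f 0 n y) < min \<epsilon> d1)"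
      proof -
        have "min \<epsilon> d1 > 0" using e d1(1) by simp
        from finite_equi[where X=X and g="omega f 0" and m=k, OF assms(1) P(1), rule_format, OF this] show ?thesis using that by blast
      qed
      show "\<exists>\<delta>>0. \<forall>x\<in>X. \<forall>y\<in>X. dist x y < \<delta> \<longrightarrow>
          (\<forall>n>0. dist (omega f 0 n x) (omega f 0 n y) < \<epsilon>)"
      proof (intro exI[of _ d] conjI ballI impI allI)
        fix x y and n :: nat assume xy: "x \<in> X" "y \<in> X" "dist x y < d" and n: "0 < n"
        show "dist (omega f 0 n x) (omega f 0 n y) < \<epsilon>"
        proof (cases "n \<le> k")
          case True
          then show ?thesis using d xy by fastforce
        next
          case False
          have "dist (omega f 0 k x) (omega f 0 k y) < d1" using d xy by fastforce
          then have "dist (omega f k n (omega f 0 k x)) (omega f k n (omega f 0 k y)) < \<epsilon>"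
            using d1 mapsX xy False by auto
          then show ?thesis using omega_split[of k n f] False by simp
        qed
      qed (use d in auto)
    qed
  }
  {
    assume E: "equicont_from X f 0"
    show "equicont_from X f k" unfolding equicont_from_def
    proof (intro allI impI)
      fix \<epsilon> :: real assume e: "\<epsilon> > 0"
      obtain d0 where d0: "d0 > 0" "\<forall>x\<in>X. \<forall>y\<in>X. dist x y < d0 \<longrightarrow>
          (\<forall>n>0. dist (omega f 0 n x) (omega f 0 n y) < \<epsilon>/2)"
      proof -
        have "\<epsilon>/2 > 0" using e by simp
        from E[unfolded equicont_from_def, rule_format, OF this] show ?thesis using that by blast
      qed
      obtain d where d: "d > 0" "\<forall>u\<in>X. \<forall>v\<in>X. dist (omega f 0 k u) (omega f 0 k v) < d \<longrightarrow>
           (\<exists>u'\<in>X. \<exists>v'\<in>X. omega f 0 k u' = omega f 0 k v' \<and> dist u u' < d0 \<and> dist v v' < d0)"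
        using fiber_lemma[OF assms(1) P(1) d0(1)] by blast
      show "\<exists>\<delta>>0. \<forall>x\<in>X. \<forall>y\<in>X. dist x y < \<delta> \<longrightarrow>
          (\<forall>n>k. dist (omega f k n x) (omega f k n y) < \<epsilon>)"
      proof (intro exI[of _ d] conjI ballI impI allI)
        fix x y and n :: nat assume xy: "x \<in> X" "y \<in> X" "dist x y < d" and n: "k < n"
        obtain u where u: "u \<in> X" "x = omega f 0 k u" using P(2) xy(1) by blast
        obtain v where v: "v \<in> X" "y = omega f 0 k v" using P(2) xy(2) by blast
        obtain u' v' where uv: "u' \<in> X" "v' \<in> X" "omega f 0 k u' = omega f 0 k v'"
          "dist u u' < d0" "dist v v' < d0"
        proof -
          have "dist (omega f 0 k u) (omega f 0 k v) < d" using xy u v by simp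
          then show ?thesis using d(2) u v that by blast
        qed
        have sp: "\<And>z. omega f 0 n z = omega f k n (omega f 0 k z)"
          using omega_split[of k n f] n by simp
        have n0: "n > 0" using n by simp
        have 1: "dist (omega f 0 n u) (omega f 0 n u') < \<epsilon>/2" using d0 u uv n0 by blast
        have 2: "dist (omega f 0 n v) (omega f 0 n v') < \<epsilon>/2" using d0 v uv n0 by blast
        have 3: "omega f 0 n u' = omega f 0 n v'" using sp uv(3) by simp
        have "dist (omega f 0 n u) (omega f 0 n v) \<le>
              dist (omega f 0 n u) (omega f 0 n u') + dist (omega f 0 n v) (omega f 0 n v')"
          using dist_triangle2[of "omega f 0 n u" "omega f 0 n v" "omega f 0 n u'"] 3 by simp
        then have "dist (omega f 0 n u) (omega f 0 n v) < \<epsilon>" using 1 2 by linarith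
        then show "dist (omega f k n x) (omega f k n y) < \<epsilon>" using sp u v by simp
      qed (use d in auto)
    qed
  }
qed

end
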